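(* Let $n\ge1$ and $m\ge2$. Every geodesic in $Y_{n,m}$ ending at the all-zero vertex $0$ has a wall.
   Context: The Yoke graph $Y_{n,m}$ has vertices the tuples $v=(v_0,\dots,v_{m+1})$ with $v_0,v_{m+1}\in\mathbb{Z}_n$, $v_1,\dots,v_m\in\{0,1\}$, $\sum v_i\equiv0\pmod n$; $u\sim v$ iff $u=\overleftarrow{s}_i(v)$ or $u=\overrightarrow{s}_i(v)$ for some $0\le i\le m$, where $\overleftarrow{s}_i(v)$ (left shift) replaces $v_i,v_{i+1}$ by $v_i+1,v_{i+1}-1$ and $\overrightarrow{s}_i(v)$ (right shift) by $v_i-1,v_{i+1}+1$ (buckets mod $n$). For a path $P=(v^0\sim\dots\sim v^d=0)$: an integer $0\le p\le m$ is an inner wall of $P$ if no step of $P$ changes entries $p$ and $p+1$; $-1$ is a (left outer) wall if no step satisfies $v^t=\overleftarrow{s}_0(v^{t-1})$; $m+1$ is a (right outer) wall if no step satisfies $v^t=\overrightarrow{s}_m(v^{t-1})$. A wall is an inner or outer wall. *)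

theory Defs
  imports Main
begin

text \<open>Vertices of the Yoke graph Y_{n,m} are represented as functions nat => int,
  entry i being v_i for i in 0..m+1 and 0 beyond m+1.  Buckets 0 and m+1 take values in
  {0..n-1} (representatives of Z_n).\<close>

definition yoke_vert :: "nat \<Rightarrow> nat \<Rightarrow> (nat \<Rightarrow> int) \<Rightarrow> bool" where
  "yoke_vert n m v \<longleftrightarrow>
     0 \<le> v 0 \<and> v 0 < int n \<and> 0 \<le> v (m+1) \<and> v (m+1) < int n \<and>
     (\<forall>i\<in>{1..m}. v i \<in> {0,1}) \<and> (\<forall>i>m+1. v i = 0) \<and>
     (\<Sum>i\<le>m+1. v i) mod int n = 0"

definition yoke_nrm :: "nat \<Rightarrow> nat \<Rightarrow> (nat \<Rightarrow> int) \<Rightarrow> (nat \<Rightarrow> int)" where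
  "yoke_nrm n m v = (\<lambda>i. if i = 0 \<or> i = m+1 then v i mod int n else v i)"

definition lshift :: "nat \<Rightarrow> nat \<Rightarrow> nat \<Rightarrow> (nat \<Rightarrow> int) \<Rightarrow> (nat \<Rightarrow> int)" where
  "lshift n m i v = yoke_nrm n m (v(i := v i + 1, Suc i := v (Suc i) - 1))"

definition rshift :: "nat \<Rightarrow> nat \<Rightarrow> nat \<Rightarrow> (nat \<Rightarrow> int) \<Rightarrow> (nat \<Rightarrow> int)" where
  "rshift n m i v = yoke_nrm n m (v(i := v i - 1, Suc i := v (Suc i) + 1))"

definition yoke_adj :: "nat \<Rightarrow> nat \<Rightarrow> (nat \<Rightarrow> int) \<Rightarrow> (nat \<Rightarrow> int) \<Rightarrow> bool" where
  "yoke_adj n m v u \<longleftrightarrow> yoke_vert n m v \<and> yoke_vert n m u \<and>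
     (\<exists>i\<le>m. u = lshift n m i v \<or> u = rshift n m i v)"

definition yoke_path :: "nat \<Rightarrow> nat \<Rightarrow> (nat \<Rightarrow> int) list \<Rightarrow> bool" where
  "yoke_path n m ps \<longleftrightarrow> ps \<noteq> [] \<and> (\<forall>v\<in>set ps. yoke_vert n m v) \<and>
     (\<forall>t. Suc t < length ps \<longrightarrow> yoke_adj n m (ps ! t) (ps ! Suc t))"

definition yoke_geodesic :: "nat \<Rightarrow> nat \<Rightarrow> (nat \<Rightarrow> int) list \<Rightarrow> bool" where
  "yoke_geodesic n m ps \<longleftrightarrow> yoke_path n m ps \<and>
     \<not> (\<exists>qs. yoke_path n m qs \<and> hd qs = hd ps \<and> last qs = last ps \<and> length qs < length ps)"

definition inner_wall :: "nat \<Rightarrow> nat \<Rightarrow> (nat \<Rightarrow> int) list \<Rightarrow> nat \<Rightarrow> bool" where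
  "inner_wall n m ps p \<longleftrightarrow> p \<le> m \<and>
     (\<forall>t. Suc t < length ps \<longrightarrow>
        ps ! Suc t \<noteq> lshift n m p (ps ! t) \<and> ps ! Suc t \<noteq> rshift n m p (ps ! t))"

definition left_outer_wall :: "nat \<Rightarrow> nat \<Rightarrow> (nat \<Rightarrow> int) list \<Rightarrow> bool" where
  "left_outer_wall n m ps \<longleftrightarrow>
     (\<forall>t. Suc t < length ps \<longrightarrow> ps ! Suc t \<noteq> lshift n m 0 (ps ! t))"

definition right_outer_wall :: "nat \<Rightarrow> nat \<Rightarrow> (nat \<Rightarrow> int) list \<Rightarrow> bool" where
  "right_outer_wall n m ps \<longleftrightarrow>
     (\<forall>t. Suc t < length ps \<longrightarrow> ps ! Suc t \<noteq> rshift n m m (ps ! t))"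

definition has_wall :: "nat \<Rightarrow> nat \<Rightarrow> (nat \<Rightarrow> int) list \<Rightarrow> bool" where
  "has_wall n m ps \<longleftrightarrow> (\<exists>p. inner_wall n m ps p) \<or> left_outer_wall n m ps \<or> right_outer_wall n m ps"

end

theory Submission
  imports Defs
begin

definition sh :: "nat \<Rightarrow> nat \<Rightarrow> nat \<Rightarrow> int \<Rightarrow> (nat \<Rightarrow> int) \<Rightarrow> (nat \<Rightarrow> int)" where
  "sh n m p s v = yoke_nrm n m (v(p := v p - s, Suc p := v (Suc p) + s))"

lemma lshift_sh: "lshift n m i v = sh n m i (-1) v"
  by (simp add: lshift_def sh_def)

lemma rshift_sh: "rshift n m i v = sh n m i 1 v"
  by (simp add: rshift_def sh_def)

definition Ssum :: "(nat \<Rightarrow> int) \<Rightarrow> nat \<Rightarrow> int" where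
  "Ssum v q = (\<Sum>i<q. v (Suc i))"

definition GG :: "int \<Rightarrow> (nat \<Rightarrow> int) \<Rightarrow> nat \<Rightarrow> int" where
  "GG c v q = c + Ssum v q"

definition Psi :: "nat \<Rightarrow> int \<Rightarrow> (nat \<Rightarrow> int) \<Rightarrow> int" where
  "Psi m c v = (\<Sum>q\<le>m. \<bar>GG c v q\<bar>)"

lemma Ssum_0[simp]: "Ssum v 0 = 0" by (simp add: Ssum_def)
lemma Ssum_Suc: "Ssum v (Suc q) = Ssum v q + v (Suc q)" by (simp add: Ssum_def)

lemma sh_site: "1 \<le> i \<Longrightarrow> i \<le> m \<Longrightarrow>
  sh n m p s v i = v i - (if i = p then s else 0) + (if i = Suc p then s else 0)"
  by (auto simp: sh_def yoke_nrm_def)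

lemma sh_Ssum: "q \<le> m \<Longrightarrow>
  Ssum (sh n m p s v) q = Ssum v q - (if 1 \<le> p \<and> p \<le> q then s else 0) + (if p < q then s else 0)"
proof (induction q)
  case 0 then show ?case by simp
next
  case (Suc q)
  have "sh n m p s v (Suc q) = v (Suc q) - (if Suc q = p then s else 0) + (if Suc q = Suc p then s else 0)"
    using Suc.prems by (intro sh_site) auto
  then show ?case using Suc by (auto simp: Ssum_Suc)
qed

lemma sh_G: "p \<le> m \<Longrightarrow> q \<le> m \<Longrightarrow>
  GG (c - (if p = 0 then s else 0)) (sh n m p s v) q = GG c v q - (if q = p then s else 0)"
  by (auto simp: GG_def sh_Ssum)

lemma Psi_diff: assumes "\<And>q. q \<le> m \<Longrightarrow> q \<noteq> p \<Longrightarrow> GG c v q = GG c' w q" "p \<le> m"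
  shows "Psi m c v = Psi m c' w + (\<bar>GG c v p\<bar> - \<bar>GG c' w p\<bar>)"
proof -
  have "Psi m c v - Psi m c' w = (\<Sum>q\<le>m. \<bar>GG c v q\<bar> - \<bar>GG c' w q\<bar>)"
    by (simp add: Psi_def sum_subtractf)
  also have "\<dots> = (\<Sum>q\<le>m. if q = p then \<bar>GG c v p\<bar> - \<bar>GG c' w p\<bar> else 0)"
    by (rule sum.cong) (auto simp: assms)
  also have "\<dots> = \<bar>GG c v p\<bar> - \<bar>GG c' w p\<bar>" using assms(2) by simp
  finally show ?thesis by simp
qed

lemma sh_unique:
  assumes "m \<ge> 2" "p \<le> m" "p' \<le> m" "s = 1 \<or> s = -1" "s' = 1 \<or> s' = -1"
    and "sh n m p s v = sh n m p' s' v"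
  shows "p = p' \<and> s = s'"
proof -
  have e: "\<And>i. 1 \<le> i \<Longrightarrow> i \<le> m \<Longrightarrow>
     (if i = p then s else 0) - (if i = Suc p then s else 0) = (if i = p' then s' else 0) - (if i = Suc p' then s' else 0)"
  proof -
    fix i assume i: "1 \<le> i" "i \<le> m"
    have "sh n m p s v i = sh n m p' s' v i" using assms(6) by simp
    then show "?thesis i" using sh_site[OF i, of n p s v] sh_site[OF i, of n p' s' v] by simp
  qed
  show ?thesis
  proof (cases "p = 0")
    case True
    then show ?thesis using e[of 1] e[of 2] e[of p'] assms(1-5) by (cases "p' = 0"; cases "p' = 1"; cases "p' = 2"; auto split: if_splits)
  next
    case False
    then show ?thesis using e[of p] e[of p'] e[of 1] e[of 2] e[of "Suc p"] assms(1-5) by (cases "p' = 0"; cases "p' = 1"; cases "p = 1"; auto split: if_splits)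
  qed
qed

lemma sh_vert:
  assumes v: "yoke_vert n m v" and n: "n \<ge> 1" and p: "p \<le> m"
    and c1: "1 \<le> p \<Longrightarrow> v p - s \<in> {0,1}" and c2: "p < m \<Longrightarrow> v (Suc p) + s \<in> {0,1}"
  shows "yoke_vert n m (sh n m p s v)"
proof -
  define v' where "v' = v(p := v p - s, Suc p := v (Suc p) + s)"
  define w where "w = sh n m p s v"
  have w: "w = yoke_nrm n m v'" by (simp add: w_def v'_def sh_def)
  have v'i: "\<And>i. v' i = v i - (if i = p then s else 0) + (if i = Suc p then s else 0)"
    by (auto simp: v'_def)
  have w0: "w 0 = v' 0 mod int n" and wm: "w (m+1) = v' (m+1) mod int n"
    by (auto simp: w yoke_nrm_def)
  have npos: "int n > 0" using n by simp
  have b1: "0 \<le> w 0 \<and> w 0 < int n" "0 \<le> w (m+1) \<and> w (m+1) < int n"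
    using w0 wm npos by auto
  have sites: "\<forall>i\<in>{1..m}. w i \<in> {0,1}"
  proof
    fix i assume i: "i \<in> {1..m}"
    have "w i = v i - (if i = p then s else 0) + (if i = Suc p then s else 0)"
      using i by (simp add: w_def sh_site)
    moreover have "v i \<in> {0,1}" using v i by (simp add: yoke_vert_def)
    ultimately show "w i \<in> {0,1}" using c1 c2 i by (auto split: if_splits)
  qed
  have beyond: "\<forall>i>m+1. w i = 0"
    using v p by (auto simp: w yoke_nrm_def v'_def yoke_vert_def)
  have wi: "\<And>i. i \<le> m+1 \<Longrightarrow> w i = v' i + (if i = 0 then w 0 - v' 0 else 0) + (if i = m+1 then w (m+1) - v' (m+1) else 0)"
    by (auto simp: w yoke_nrm_def)
  have "(\<Sum>i\<le>m+1. w i) = (\<Sum>i\<le>m+1. v' i + (if i = 0 then w 0 - v' 0 else 0) + (if i = m+1 then w (m+1) - v' (m+1) else 0))"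
    by (rule sum.cong) (auto simp: wi)
  also have "\<dots> = (\<Sum>i\<le>m+1. v' i) + (w 0 - v' 0) + (w (m+1) - v' (m+1))"
    by (simp add: sum.distrib)
  also have "(\<Sum>i\<le>m+1. v' i) = (\<Sum>i\<le>m+1. v i - (if i = p then s else 0) + (if i = Suc p then s else 0))"
    by (simp add: v'i)
  also have "\<dots> = (\<Sum>i\<le>m+1. v i)" using p by (simp add: sum.distrib sum_subtractf)
  finally have sw: "(\<Sum>i\<le>m+1. w i) = (\<Sum>i\<le>m+1. v i) + (w 0 - v' 0) + (w (m+1) - v' (m+1))" .
  have d1: "w 0 - v' 0 = int n * (- (v' 0 div int n))"
    using minus_mult_div_eq_mod[of "v' 0" "int n"] w0 by simp
  have d2: "w (m+1) - v' (m+1) = int n * (- (v' (m+1) div int n))"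
    using minus_mult_div_eq_mod[of "v' (m+1)" "int n"] wm by simp
  have "(\<Sum>i\<le>m+1. v i) mod int n = 0" using v by (simp add: yoke_vert_def)
  moreover have "\<And>S x y. S + int n * x + int n * y = S + int n * (x + y)"
    by (simp add: distrib_left)
  ultimately have "(\<Sum>i\<le>m+1. w i) mod int n = 0" unfolding sw d1 d2
    by (metis mod_mult_self2 mult.commute)
  then show ?thesis using b1 sites beyond by (simp add: yoke_vert_def w_def)
qed

lemma vert_site: "yoke_vert n m v \<Longrightarrow> 1 \<le> i \<Longrightarrow> i \<le> m \<Longrightarrow> v i = 0 \<or> v i = 1"
  by (auto simp: yoke_vert_def)

lemma GG_0[simp]: "GG c v 0 = c" by (simp add: GG_def)
lemma GG_Suc: "GG c v (Suc q) = GG c v q + v (Suc q)" by (simp add: GG_def Ssum_Suc)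

lemma GG_mono: assumes "yoke_vert n m v" "q \<le> q'" "q' \<le> m" shows "GG c v q \<le> GG c v q'"
  using assms(2,3)
proof (induction q')
  case 0 then show ?case by simp
next
  case (Suc q')
  have "v (Suc q') \<ge> 0" using vert_site[OF assms(1), of "Suc q'"] Suc.prems by auto
  then show ?case using Suc by (cases "q = Suc q'") (auto simp: GG_Suc)
qed

lemma zero_vert: "n \<ge> 1 \<Longrightarrow> yoke_vert n m (\<lambda>_. 0)"
  by (simp add: yoke_vert_def)

lemma Psi_zero:
  assumes v: "yoke_vert n m v" and n: "n \<ge> 1" and c: "(c - v 0) mod int n = 0" and P: "Psi m c v = 0"
  shows "v = (\<lambda>_. 0)"
proof -
  have G0: "\<And>q. q \<le> m \<Longrightarrow> GG c v q = 0"
    using P unfolding Psi_def by (subst (asm) sum_nonneg_eq_0_iff) auto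
  have c0: "c = 0" using G0[of 0] by simp
  have sites: "\<And>i. 1 \<le> i \<Longrightarrow> i \<le> m \<Longrightarrow> v i = 0"
  proof -
    fix i assume i: "1 \<le> i" "i \<le> m"
    then obtain j where j: "i = Suc j" by (cases i) auto
    show "v i = 0" using G0[of i] G0[of j] i j by (simp add: GG_Suc)
  qed
  have "int n dvd v 0" using c c0 by auto
  then have v0: "v 0 = 0" using v unfolding yoke_vert_def by (metis mod_pos_pos_trivial dvd_imp_mod_0)
  have "(\<Sum>i\<le>m. v i) = 0"
    by (rule sum.neutral) (use sites v0 in \<open>metis One_nat_def Suc_leI atMost_iff neq0_conv\<close>)
  then have "v (m+1) mod int n = 0" using v by (simp add: yoke_vert_def)
  then have vm: "v (m+1) = 0" using v by (auto simp: yoke_vert_def)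
  show ?thesis
  proof
    fix i
    show "v i = 0"
      using sites[of i] v0 vm v unfolding yoke_vert_def
      by (cases "i = 0"; cases "i \<le> m"; cases "i = m+1"; auto)
  qed
qed

lemma path_cons: "yoke_path n m (v # qs) \<longleftrightarrow>
   yoke_vert n m v \<and> (qs = [] \<or> (yoke_path n m qs \<and> yoke_adj n m v (hd qs)))"
proof
  assume a: "yoke_path n m (v # qs)"
  have "qs \<noteq> [] \<Longrightarrow> yoke_adj n m v (hd qs)"
    using a unfolding yoke_path_def by (metis hd_conv_nth length_Cons length_greater_0_conv nth_Cons_0 nth_Cons_Suc zero_less_Suc Suc_less_eq)
  moreover have "qs \<noteq> [] \<Longrightarrow> yoke_path n m qs"
    using a unfolding yoke_path_def by (metis Suc_less_eq length_Cons list.set_intros(2) nth_Cons_Suc)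
  ultimately show "yoke_vert n m v \<and> (qs = [] \<or> (yoke_path n m qs \<and> yoke_adj n m v (hd qs)))"
    using a unfolding yoke_path_def by auto
next
  assume a: "yoke_vert n m v \<and> (qs = [] \<or> (yoke_path n m qs \<and> yoke_adj n m v (hd qs)))"
  show "yoke_path n m (v # qs)"
  proof (cases "qs = []")
    case True then show ?thesis using a by (simp add: yoke_path_def)
  next
    case False
    then have p: "yoke_path n m qs" "yoke_adj n m v (hd qs)" using a by auto
    have "\<forall>t. Suc t < length (v # qs) \<longrightarrow> yoke_adj n m ((v # qs) ! t) ((v # qs) ! Suc t)"
    proof (intro allI impI)
      fix t assume t: "Suc t < length (v # qs)"
      show "yoke_adj n m ((v # qs) ! t) ((v # qs) ! Suc t)"
      proof (cases t)
        case 0 then show ?thesis using p False by (simp add: hd_conv_nth)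
      next
        case (Suc t') then show ?thesis using p t unfolding yoke_path_def by simp
      qed
    qed
    then show ?thesis using a p unfolding yoke_path_def by auto
  qed
qed

lemma good_move:
  assumes v: "yoke_vert n m v" and q: "q \<le> m" "GG c v q \<noteq> 0"
  shows "\<exists>p s. p \<le> m \<and> (s = 1 \<or> s = -1) \<and> s * GG c v p \<ge> 1 \<and>
     (1 \<le> p \<longrightarrow> v p - s \<in> {0,1}) \<and> (p < m \<longrightarrow> v (Suc p) + s \<in> {0,1})"
proof (cases "\<exists>q\<le>m. GG c v q \<ge> 1")
  case True
  define A where "A = {q. q \<le> m \<and> GG c v q \<ge> 1 \<and> (q = 0 \<or> v q = 1)}"
  have finA: "finite A" unfolding A_def by (rule finite_subset[of _ "{..m}"]) auto
  define a where "a = (LEAST q. q \<le> m \<and> GG c v q \<ge> 1)"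
  have a1: "a \<le> m \<and> GG c v a \<ge> 1" unfolding a_def using True by (metis (mono_tags, lifting) LeastI)
  have "a \<in> A"
  proof (cases a)
    case 0 then show ?thesis using a1 by (simp add: A_def)
  next
    case (Suc a')
    have "\<not> (a' \<le> m \<and> GG c v a' \<ge> 1)" unfolding a_def
      using not_less_Least[of a' "\<lambda>q. q \<le> m \<and> GG c v q \<ge> 1"] Suc unfolding a_def by simp
    then have "GG c v a' < 1" using a1 Suc by auto
    moreover have "v a = 0 \<or> v a = 1" using vert_site[OF v, of a] a1 Suc by auto
    ultimately show ?thesis using a1 Suc by (auto simp: A_def GG_Suc)
  qed
  then have ne: "A \<noteq> {}" by auto
  define p where "p = Max A"
  have pA: "p \<in> A" unfolding p_def using finA ne by simp
  have pmax: "\<And>x. x \<in> A \<Longrightarrow> x \<le> p" unfolding p_def using finA by simp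
  have c2: "p < m \<longrightarrow> v (Suc p) + 1 \<in> {0,1}"
  proof
    assume pm: "p < m"
    have "v (Suc p) = 0 \<or> v (Suc p) = 1" using vert_site[OF v, of "Suc p"] pm by auto
    moreover have "v (Suc p) \<noteq> 1"
    proof
      assume "v (Suc p) = 1"
      then have "Suc p \<in> A" using pA pm by (auto simp: A_def GG_Suc)
      then show False using pmax by fastforce
    qed
    ultimately show "v (Suc p) + 1 \<in> {0,1}" by auto
  qed
  show ?thesis
    by (rule exI[of _ p], rule exI[of _ 1]) (use pA c2 in \<open>auto simp: A_def\<close>)
next
  case False
  then have ex: "\<exists>q\<le>m. GG c v q \<le> -1" using q by force
  define B where "B = {q. q \<le> m \<and> GG c v q \<le> -1 \<and> (q = m \<or> v (Suc q) = 1)}"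
  have finB: "finite B" unfolding B_def by (rule finite_subset[of _ "{..m}"]) auto
  define C where "C = {q. q \<le> m \<and> GG c v q \<le> -1}"
  have finC: "finite C" unfolding C_def by (rule finite_subset[of _ "{..m}"]) auto
  define b where "b = Max C"
  have "C \<noteq> {}" using ex by (auto simp: C_def)
  then have bC: "b \<in> C" unfolding b_def using finC by (rule Max_in[rotated])
  have bmax: "\<And>x. x \<in> C \<Longrightarrow> x \<le> b" unfolding b_def using finC by simp
  have "b \<in> B"
  proof (cases "b = m")
    case True then show ?thesis using bC by (simp add: B_def C_def)
  next
    case False
    then have bm: "b < m" using bC by (simp add: C_def)
    have "Suc b \<notin> C" using bmax by fastforce
    then have "GG c v (Suc b) > -1" using bm by (auto simp: C_def)
    moreover have "v (Suc b) = 0 \<or> v (Suc b) = 1" using vert_site[OF v, of "Suc b"] bm by auto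
    ultimately show ?thesis using bC by (auto simp: B_def C_def GG_Suc)
  qed
  then have ne: "B \<noteq> {}" by auto
  define p where "p = Min B"
  have pB: "p \<in> B" unfolding p_def using finB ne by simp
  have pmin: "\<And>x. x \<in> B \<Longrightarrow> p \<le> x" unfolding p_def using finB by simp
  have c1: "1 \<le> p \<longrightarrow> v p - (-1) \<in> {0,1}"
  proof
    assume p1: "1 \<le> p"
    then obtain p' where p': "p = Suc p'" by (cases p) auto
    have "v p = 0 \<or> v p = 1" using vert_site[OF v, of p] p1 pB by (auto simp: B_def)
    moreover have "v p \<noteq> 1"
    proof
      assume "v p = 1"
      then have "p' \<in> B" using pB p' by (auto simp: B_def GG_Suc)
      then show False using pmin p' by fastforce
    qed
    ultimately show "v p - (-1) \<in> {0,1}" by auto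
  qed
  show ?thesis
    by (rule exI[of _ p], rule exI[of _ "-1"]) (use pB c1 in \<open>auto simp: B_def\<close>)
qed

lemma sh_0: "p \<le> m \<Longrightarrow> sh n m p s v 0 = (v 0 - (if p = 0 then s else 0)) mod int n"
  by (auto simp: sh_def yoke_nrm_def)

lemma cong_step:
  assumes "(c - v 0) mod int n = 0"
  shows "((c - t) - ((v 0 - t) mod int n)) mod int n = 0"
proof -
  have "int n dvd (c - v 0)" using assms by auto
  moreover have "int n dvd ((v 0 - t) - (v 0 - t) mod int n)"
    by (metis minus_mod_eq_mult_div dvd_triv_left)
  ultimately have "int n dvd ((c - v 0) + ((v 0 - t) - (v 0 - t) mod int n))" by (rule dvd_add)
  then show ?thesis by (simp add: algebra_simps)
qed

lemma abs_step: "(s = 1 \<or> s = -1) \<Longrightarrow> s * (g::int) \<ge> 1 \<Longrightarrow> \<bar>g\<bar> - \<bar>g - s\<bar> = 1"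
  by auto

lemma path_exists:
  assumes n: "n \<ge> 1"
  shows "\<And>v c. yoke_vert n m v \<Longrightarrow> (c - v 0) mod int n = 0 \<Longrightarrow> Psi m c v = int k \<Longrightarrow>
    \<exists>qs. yoke_path n m qs \<and> hd qs = v \<and> last qs = (\<lambda>_. 0) \<and> length qs = k + 1"
proof (induction k)
  case 0
  then have "v = (\<lambda>_. 0)" using Psi_zero n by simp
  then show ?case using "0.prems" by (intro exI[of _ "[v]"]) (simp add: yoke_path_def)
next
  case (Suc k)
  have "\<exists>q\<le>m. GG c v q \<noteq> 0"
  proof (rule ccontr)
    assume "\<not> ?thesis"
    then have "Psi m c v = 0" by (simp add: Psi_def)
    then show False using Suc.prems by simp
  qed
  then obtain q where "q \<le> m" "GG c v q \<noteq> 0" by auto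
  then obtain p s where ps: "p \<le> m" "s = 1 \<or> s = -1" "s * GG c v p \<ge> 1"
    "1 \<le> p \<longrightarrow> v p - s \<in> {0,1}" "p < m \<longrightarrow> v (Suc p) + s \<in> {0,1}"
    using good_move[OF Suc.prems(1)] by blast
  define w where "w = sh n m p s v"
  define c' where "c' = c - (if p = 0 then s else 0)"
  have wv: "yoke_vert n m w" unfolding w_def using sh_vert[OF Suc.prems(1) n ps(1)] ps(4,5) by blast
  have Gw: "\<And>q. q \<le> m \<Longrightarrow> GG c' w q = GG c v q - (if q = p then s else 0)"
    unfolding c'_def w_def using sh_G ps(1) by blast
  have "Psi m c v = Psi m c' w + (\<bar>GG c v p\<bar> - \<bar>GG c' w p\<bar>)"
    by (rule Psi_diff) (use Gw ps(1) in auto)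
  moreover have "\<bar>GG c v p\<bar> - \<bar>GG c' w p\<bar> = 1" using Gw[OF ps(1)] abs_step[OF ps(2,3)] by simp
  ultimately have Pw: "Psi m c' w = int k" using Suc.prems(3) by simp
  have cw: "(c' - w 0) mod int n = 0"
    unfolding c'_def w_def sh_0[OF ps(1)] by (rule cong_step[where v=v, OF Suc.prems(2)])
  obtain qs where qs: "yoke_path n m qs" "hd qs = w" "last qs = (\<lambda>_. 0)" "length qs = k + 1"
    using Suc.IH[OF wv cw Pw] by blast
  have adj: "yoke_adj n m v w"
    unfolding yoke_adj_def using Suc.prems(1) wv ps(1,2)
    by (auto simp: w_def lshift_sh rshift_sh)
  have "qs \<noteq> []" using qs(4) by auto
  then have "yoke_path n m (v # qs)" using path_cons[of n m v qs] qs adj Suc.prems(1) by simp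
  then show ?case using qs `qs \<noteq> []` by (intro exI[of _ "v # qs"]) simp
qed

lemma cong_back:
  assumes "(cr - (x - t) mod int n) mod int n = 0"
  shows "(cr + t - x) mod int n = 0"
proof -
  have "int n dvd (cr - (x - t) mod int n)" using assms by auto
  moreover have "int n dvd ((x - t) mod int n - (x - t))"
    by (metis minus_mod_eq_mult_div dvd_triv_left dvd_minus_iff minus_diff_eq)
  ultimately have "int n dvd ((cr - (x - t) mod int n) + ((x - t) mod int n - (x - t)))" by (rule dvd_add)
  then show ?thesis by (simp add: algebra_simps)
qed

lemma abs_le1: "(s = 1 \<or> s = -1) \<Longrightarrow> \<bar>g\<bar> - \<bar>g - s\<bar> \<le> (1::int)"
  by auto

lemma abs_eq1: "(s = 1 \<or> s = -1) \<Longrightarrow> \<bar>g\<bar> - \<bar>g - s\<bar> = (1::int) \<Longrightarrow> s * g \<ge> 1"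
  by auto

lemma sign_keep: "(s = 1 \<or> s = -1) \<Longrightarrow> (s' = 1 \<or> s' = -1) \<Longrightarrow> s' * (x::int) \<ge> 1 \<Longrightarrow> s * (x + s) \<ge> 1
   \<Longrightarrow> s' * (x + s) \<ge> 1"
  by auto

lemma Psi_zero_vec: "Psi m 0 (\<lambda>_. 0) = 0"
  by (simp add: Psi_def GG_def Ssum_def)

lemma path_potential:
  assumes m: "m \<ge> 2" and n: "n \<ge> 1"
  shows "yoke_path n m ps \<Longrightarrow> last ps = (\<lambda>_. 0) \<Longrightarrow>
    \<exists>c. (c - hd ps 0) mod int n = 0 \<and> Psi m c (hd ps) \<le> int (length ps) - 1 \<and>
      (Psi m c (hd ps) = int (length ps) - 1 \<longrightarrow>
        (\<forall>t p s. Suc t < length ps \<longrightarrow> p \<le> m \<longrightarrow> (s = 1 \<or> s = -1) \<longrightarrow>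
           ps ! Suc t = sh n m p s (ps ! t) \<longrightarrow> s * GG c (hd ps) p \<ge> 1))"
proof (induction ps)
  case Nil then show ?case by (simp add: yoke_path_def)
next
  case (Cons v rest)
  show ?case
  proof (cases "rest = []")
    case True
    then have "v = (\<lambda>_. 0)" using Cons.prems by simp
    then show ?thesis using True by (intro exI[of _ 0]) (simp add: Psi_zero_vec)
  next
    case False
    have pr: "yoke_path n m rest" "yoke_adj n m v (hd rest)" "yoke_vert n m v"
      using Cons.prems(1) False path_cons[of n m v rest] by auto
    have lr: "last rest = (\<lambda>_. 0)" using Cons.prems(2) False by simp
    obtain cr where cr: "(cr - hd rest 0) mod int n = 0" "Psi m cr (hd rest) \<le> int (length rest) - 1"
      "Psi m cr (hd rest) = int (length rest) - 1 \<longrightarrow>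
        (\<forall>t p s. Suc t < length rest \<longrightarrow> p \<le> m \<longrightarrow> (s = 1 \<or> s = -1) \<longrightarrow>
           rest ! Suc t = sh n m p s (rest ! t) \<longrightarrow> s * GG cr (hd rest) p \<ge> 1)"
      using Cons.IH[OF pr(1) lr] by (elim exE conjE) (rule that; assumption)
    define w where "w = hd rest"
    obtain p s where ps: "p \<le> m" "s = 1 \<or> s = -1" "w = sh n m p s v"
      using pr(2) unfolding yoke_adj_def w_def by (auto simp: lshift_sh rshift_sh)
    define c where "c = cr + (if p = 0 then s else 0)"
    have cc: "c - (if p = 0 then s else 0) = cr" by (simp add: c_def)
    have Gw: "\<And>q. q \<le> m \<Longrightarrow> GG cr w q = GG c v q - (if q = p then s else 0)"
      using sh_G[OF ps(1), of _ c s n v] ps(3) unfolding cc by simp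
    have Pd: "Psi m c v = Psi m cr w + (\<bar>GG c v p\<bar> - \<bar>GG cr w p\<bar>)"
      by (rule Psi_diff) (use Gw ps(1) in auto)
    have step1: "\<bar>GG c v p\<bar> - \<bar>GG cr w p\<bar> \<le> 1" using Gw[OF ps(1)] abs_le1[OF ps(2)] by simp
    have cong: "(c - v 0) mod int n = 0"
    proof -
      have "(cr - (v 0 - (if p = 0 then s else 0)) mod int n) mod int n = 0"
        using cr(1) ps(3) sh_0[OF ps(1), of n s v] unfolding w_def by simp
      from cong_back[OF this] show ?thesis by (simp add: c_def)
    qed
    have lenps: "length (v # rest) = Suc (length rest)" by simp
    have le: "Psi m c v \<le> int (length (v # rest)) - 1"
      using Pd step1 cr(2) unfolding w_def by simp
    have tight: "Psi m c v = int (length (v # rest)) - 1 \<longrightarrow>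
        (\<forall>t p' s'. Suc t < length (v # rest) \<longrightarrow> p' \<le> m \<longrightarrow> (s' = 1 \<or> s' = -1) \<longrightarrow>
           (v # rest) ! Suc t = sh n m p' s' ((v # rest) ! t) \<longrightarrow> s' * GG c v p' \<ge> 1)"
    proof (intro impI allI)
      fix t p' s'
      assume T: "Psi m c v = int (length (v # rest)) - 1"
        and t: "Suc t < length (v # rest)" and p': "p' \<le> m" and s': "s' = 1 \<or> s' = -1"
        and st: "(v # rest) ! Suc t = sh n m p' s' ((v # rest) ! t)"
      have e1: "\<bar>GG c v p\<bar> - \<bar>GG cr w p\<bar> = 1" and Tr: "Psi m cr w = int (length rest) - 1"
        using T Pd step1 cr(2) unfolding w_def by auto
      have sg: "s * GG c v p \<ge> 1" using abs_eq1[OF ps(2)] e1 Gw[OF ps(1)] by simp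
      show "s' * GG c v p' \<ge> 1"
      proof (cases t)
        case 0
        then have "sh n m p s v = sh n m p' s' v" using st ps(3) False by (simp add: w_def hd_conv_nth)
        then have "p = p' \<and> s = s'" using sh_unique[OF m ps(1) p' ps(2) s'] by blast
        then show ?thesis using sg by simp
      next
        case (Suc t')
        have "s' * GG cr w p' \<ge> 1"
        proof -
          have "Suc t' < length rest" using t Suc by simp
          moreover have "rest ! Suc t' = sh n m p' s' (rest ! t')" using st Suc by simp
          ultimately show ?thesis using cr(3) Tr p' s' unfolding w_def by blast
        qed
        then show ?thesis
        proof (cases "p' = p")
          case True
          then have "1 \<le> s' * (GG c v p - s)" using Gw[OF p'] \<open>s' * GG cr w p' \<ge> 1\<close> by simp
          then show ?thesis using sign_keep[OF ps(2) s', of "GG c v p - s"] sg True by simp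
        next
          case False
          then show ?thesis using Gw[OF p'] \<open>s' * GG cr w p' \<ge> 1\<close> by simp
        qed
      qed
    qed
    show ?thesis using cong le tight by (intro exI[of _ c]) simp
  qed
qed

theorem lemma4p7:
  fixes n m :: nat and ps :: "(nat \<Rightarrow> int) list"
  assumes "n \<ge> 1" and "m \<ge> 2"
    and "yoke_geodesic n m ps" and "last ps = (\<lambda>_. 0)"
  shows "has_wall n m ps"
proof -
  have P: "yoke_path n m ps" and noshort: "\<not> (\<exists>qs. yoke_path n m qs \<and> hd qs = hd ps \<and> last qs = last ps \<and> length qs < length ps)"
    using assms(3) by (auto simp: yoke_geodesic_def)
  obtain c where c: "(c - hd ps 0) mod int n = 0" "Psi m c (hd ps) \<le> int (length ps) - 1"
    "Psi m c (hd ps) = int (length ps) - 1 \<longrightarrow>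
        (\<forall>t p s. Suc t < length ps \<longrightarrow> p \<le> m \<longrightarrow> (s = 1 \<or> s = -1) \<longrightarrow>
           ps ! Suc t = sh n m p s (ps ! t) \<longrightarrow> s * GG c (hd ps) p \<ge> 1)"
    using path_potential[OF assms(2,1) P assms(4)] by (elim exE conjE) (rule that; assumption)
  define v0 where "v0 = hd ps"
  have ne: "ps \<noteq> []" using P by (simp add: yoke_path_def)
  have vv: "yoke_vert n m v0" using P ne unfolding v0_def yoke_path_def by simp
  have nn: "Psi m c v0 \<ge> 0" unfolding Psi_def by (simp add: sum_nonneg)
  define k where "k = nat (Psi m c v0)"
  have Pk: "Psi m c v0 = int k" using nn by (simp add: k_def)
  obtain qs where qs: "yoke_path n m qs" "hd qs = v0" "last qs = (\<lambda>_. 0)" "length qs = k + 1"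
    using path_exists[OF assms(1) vv c(1)[folded v0_def] Pk] by blast
  have "\<not> (length qs < length ps)" using noshort qs assms(4) unfolding v0_def by auto
  then have T: "Psi m c v0 = int (length ps) - 1" using c(2) qs(4) Pk unfolding v0_def by simp
  have H: "\<And>t p s. Suc t < length ps \<Longrightarrow> p \<le> m \<Longrightarrow> (s = 1 \<or> s = -1) \<Longrightarrow>
           ps ! Suc t = sh n m p s (ps ! t) \<Longrightarrow> s * GG c v0 p \<ge> 1"
    using c(3) T unfolding v0_def by blast
  show ?thesis
  proof (rule ccontr)
    assume nw: "\<not> has_wall n m ps"
    then obtain t1 where t1: "Suc t1 < length ps" "ps ! Suc t1 = sh n m 0 (-1) (ps ! t1)"
      unfolding has_wall_def left_outer_wall_def lshift_sh by blast
    have g0: "GG c v0 0 \<le> -1" using H[OF t1(1) _ _ t1(2)] by simp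
    obtain t2 where t2: "Suc t2 < length ps" "ps ! Suc t2 = sh n m m 1 (ps ! t2)"
      using nw unfolding has_wall_def right_outer_wall_def rshift_sh by blast
    have gm: "GG c v0 m \<ge> 1" using H[OF t2(1) _ _ t2(2)] by simp
    define p where "p = (LEAST q. GG c v0 q \<ge> 0)"
    have pge: "GG c v0 p \<ge> 0" unfolding p_def using gm by (metis (mono_tags, lifting) LeastI dual_order.trans zero_le_one)
    have pm: "p \<le> m" unfolding p_def using gm by (intro Least_le) simp
    have "p \<noteq> 0"
    proof
      assume "p = 0" then show False using pge g0 by simp
    qed
    then obtain p' where p': "p = Suc p'" by (cases p) auto
    have "\<not> GG c v0 p' \<ge> 0" using not_less_Least[of p' "\<lambda>q. GG c v0 q \<ge> 0"] p' unfolding p_def by simp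
    moreover have "v0 p = 0 \<or> v0 p = 1" using vert_site[OF vv, of p] pm p' by simp
    ultimately have p0: "GG c v0 p = 0" using pge p' by (auto simp: GG_Suc)
    have "inner_wall n m ps p"
      unfolding inner_wall_def lshift_sh rshift_sh
    proof (intro conjI pm allI impI)
      fix t assume t: "Suc t < length ps"
      show "ps ! Suc t \<noteq> sh n m p (- 1) (ps ! t)" using H[OF t pm, of "-1"] p0 by auto
      show "ps ! Suc t \<noteq> sh n m p 1 (ps ! t)" using H[OF t pm, of 1] p0 by auto
    qed
    then show False using nw unfolding has_wall_def by blast
  qed
qed

end
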